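(* Let $\mathbf{L}\in Q^2(\mathbb{D}^2)$. An analytic function $F\colon\mathbb{D}^2\to\mathbb{C}$ has bounded $\mathbf{L}$-index in joint variables if and only if for any $R'=(r_1',r_2')$, $R''=(r_1'',r_2'')$ with $0<r_j'<r_j''\le\beta$ ($j=1,2$) there exists $p_1=p_1(R',R'')\ge1$ such that for each $z^0\in\mathbb{D}^2$ $$M\Big(\frac{R''}{\mathbf{L}(z^0)},z^0,F\Big)\le p_1\,M\Big(\frac{R'}{\mathbf{L}(z^0)},z^0,F\Big).$$
   Context: $\mathbb{D}^2=\{(z_1,z_2)\in\mathbb{C}^2:|z_1|<1,|z_2|<1\}$, $\mathbb{Z}_+=\{0,1,2,\dots\}$, $\mathbb{R}_+=[0,\infty)$. A constant $\beta>1$ is fixed. $\mathbf{L}(z)=(l_1(z),l_2(z))$, where each $l_j\colon\mathbb{D}^2\to\mathbb{R}_+$ is continuous and satisfies $l_j(z_1,z_2)>\beta/(1-|z_j|)$ for all $(z_1,z_2)\in\mathbb{D}^2$, $j=1,2$. For $z^0\in\mathbb{C}^2$ and $R=(r_1,r_2)\in\mathbb{R}_+^2$: $\mathbb{D}^2[z^0,R]=\{z:|z_j-z_j^0|\le r_j,\ j=1,2\}$, $\mathbb{T}^2(z^0,R)=\{z:|z_j-z_j^0|=r_j,\ j=1,2\}$, $\frac{R}{\mathbf{L}(z^0)}=\big(\frac{r_1}{l_1(z^0)},\frac{r_2}{l_2(z^0)}\big)$, and $M(R,z^0,F)=\max\{|F(z)|: z\in\mathbb{T}^2(z^0,R)\}$.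 $F^{(p,q)}=\frac{\partial^{p+q}F}{\partial z_1^p\partial z_2^q}$. An analytic $F\colon\mathbb{D}^2\to\mathbb{C}$ has bounded $\mathbf{L}$-index in joint variables if there is $n_0\in\mathbb{Z}_+$ such that for all $z\in\mathbb{D}^2$ and all $(p_1,p_2)\in\mathbb{Z}_+^2$: $\frac{|F^{(p_1,p_2)}(z)|}{p_1!p_2!\,l_1^{p_1}(z)l_2^{p_2}(z)}\le\max\{\frac{|F^{(k_1,k_2)}(z)|}{k_1!k_2!\,l_1^{k_1}(z)l_2^{k_2}(z)}:0\le k_1+k_2\le n_0\}$. $Q^2(\mathbb{D}^2)$ is the class of such $\mathbf{L}$ for which, for all $R=(r_1,r_2)\in[0,\beta]^2$ and $j=1,2$, $0<\lambda_{1,j}(R)\le\lambda_{2,j}(R)<\infty$, where $\lambda_{1,j}(R)=\inf_{z^0\in\mathbb{D}^2}\inf\{l_j(z)/l_j(z^0): z\in\mathbb{D}^2[z^0,R/\mathbf{L}(z^0)]\}$ and $\lambda_{2,j}(R)=\sup_{z^0\in\mathbb{D}^2}\sup\{l_j(z)/l_j(z^0): z\in\mathbb{D}^2[z^0,R/\mathbf{L}(z^0)]\}$. *)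

theory Defs
  imports "HOL-Complex_Analysis.Complex_Analysis"
begin

definition bidisc :: "(complex \<times> complex) set" where
  "bidisc = {z. cmod (fst z) < 1 \<and> cmod (snd z) < 1}"

definition cpolydisc :: "complex \<times> complex \<Rightarrow> real \<times> real \<Rightarrow> (complex \<times> complex) set" where
  "cpolydisc z0 R = {z. cmod (fst z - fst z0) \<le> fst R \<and> cmod (snd z - snd z0) \<le> snd R}"

definition torus2 :: "complex \<times> complex \<Rightarrow> real \<times> real \<Rightarrow> (complex \<times> complex) set" where
  "torus2 z0 R = {z. cmod (fst z - fst z0) = fst R \<and> cmod (snd z - snd z0) = snd R}"

definition divL :: "real \<times> real \<Rightarrow> (complex \<times> complex \<Rightarrow> real) \<Rightarrow> (complex \<times> complex \<Rightarrow> real)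
    \<Rightarrow> complex \<times> complex \<Rightarrow> real \<times> real" where
  "divL R l1 l2 z0 = (fst R / l1 z0, snd R / l2 z0)"

text \<open>Maximum modulus on the skeleton (the maximum exists for continuous F; written as Sup).\<close>
definition maxmod :: "real \<times> real \<Rightarrow> complex \<times> complex \<Rightarrow> (complex \<times> complex \<Rightarrow> complex) \<Rightarrow> real" where
  "maxmod R z0 F = (SUP z \<in> torus2 z0 R. cmod (F z))"

text \<open>Analyticity in D^2: continuous and holomorphic in each variable separately
  (equivalent to joint holomorphy by Osgood's lemma).\<close>
definition analytic2 :: "(complex \<times> complex \<Rightarrow> complex) \<Rightarrow> bool" where
  "analytic2 F \<longleftrightarrow> continuous_on bidisc F \<and>
     (\<forall>z \<in> bidisc. (\<lambda>w. F (w, snd z)) field_differentiable at (fst z)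
                  \<and> (\<lambda>w. F (fst z, w)) field_differentiable at (snd z))"

definition pd1 :: "(complex \<times> complex \<Rightarrow> complex) \<Rightarrow> complex \<times> complex \<Rightarrow> complex" where
  "pd1 G z = deriv (\<lambda>w. G (w, snd z)) (fst z)"

definition pd2 :: "(complex \<times> complex \<Rightarrow> complex) \<Rightarrow> complex \<times> complex \<Rightarrow> complex" where
  "pd2 G z = deriv (\<lambda>w. G (fst z, w)) (snd z)"

definition pderiv2 :: "(complex \<times> complex \<Rightarrow> complex) \<Rightarrow> nat \<Rightarrow> nat \<Rightarrow> complex \<times> complex \<Rightarrow> complex" where
  "pderiv2 F p q = (pd1 ^^ p) ((pd2 ^^ q) F)"

definition nterm :: "(complex \<times> complex \<Rightarrow> complex) \<Rightarrow> (complex \<times> complex \<Rightarrow> real)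
    \<Rightarrow> (complex \<times> complex \<Rightarrow> real) \<Rightarrow> complex \<times> complex \<Rightarrow> nat \<times> nat \<Rightarrow> real" where
  "nterm F l1 l2 z k = cmod (pderiv2 F (fst k) (snd k) z) /
       (fact (fst k) * fact (snd k) * l1 z ^ fst k * l2 z ^ snd k)"

definition bounded_L_index :: "(complex \<times> complex \<Rightarrow> complex) \<Rightarrow> (complex \<times> complex \<Rightarrow> real)
    \<Rightarrow> (complex \<times> complex \<Rightarrow> real) \<Rightarrow> bool" where
  "bounded_L_index F l1 l2 \<longleftrightarrow>
     (\<exists>n0::nat. \<forall>z \<in> bidisc. \<forall>p1 p2.
        nterm F l1 l2 z (p1, p2) \<le> Max (nterm F l1 l2 z ` {k. fst k + snd k \<le> n0}))"

definition admissible_L :: "real \<Rightarrow> (complex \<times> complex \<Rightarrow> real) \<Rightarrow> (complex \<times> complex \<Rightarrow> real) \<Rightarrow> bool" where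
  "admissible_L \<beta> l1 l2 \<longleftrightarrow>
     continuous_on bidisc l1 \<and> continuous_on bidisc l2 \<and>
     (\<forall>z \<in> bidisc. l1 z \<ge> 0 \<and> l2 z \<ge> 0 \<and>
        l1 z > \<beta> / (1 - cmod (fst z)) \<and> l2 z > \<beta> / (1 - cmod (snd z)))"

text \<open>Ratio set whose inf is lambda_{1,j}(R) and sup is lambda_{2,j}(R).\<close>
definition ratios :: "real \<Rightarrow> (complex \<times> complex \<Rightarrow> real) \<Rightarrow> (complex \<times> complex \<Rightarrow> real)
    \<Rightarrow> (complex \<times> complex \<Rightarrow> real) \<Rightarrow> real \<times> real \<Rightarrow> real set" where
  "ratios \<beta> l1 l2 lj R = {lj z / lj z0 | z z0. z0 \<in> bidisc \<and> z \<in> bidisc \<and>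
        z \<in> cpolydisc z0 (divL R l1 l2 z0)}"

definition Q2 :: "real \<Rightarrow> (complex \<times> complex \<Rightarrow> real) \<Rightarrow> (complex \<times> complex \<Rightarrow> real) \<Rightarrow> bool" where
  "Q2 \<beta> l1 l2 \<longleftrightarrow> admissible_L \<beta> l1 l2 \<and>
     (\<forall>R. 0 \<le> fst R \<and> fst R \<le> \<beta> \<and> 0 \<le> snd R \<and> snd R \<le> \<beta> \<longrightarrow>
        (\<forall>lj \<in> {l1, l2}.
           0 < Inf (ratios \<beta> l1 l2 lj R) \<and> bdd_below (ratios \<beta> l1 l2 lj R) \<and>
           bdd_above (ratios \<beta> l1 l2 lj R)))"

end

theory Submission
  imports Defs
begin


lemma pd2_pow: "(pd2 ^^ q) F (u, v) = (deriv ^^ q) (\<lambda>v. F (u, v)) v"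
proof (induction q arbitrary: v)
  case 0 show ?case by simp
next
  case (Suc q)
  have "(pd2 ^^ Suc q) F (u, v) = deriv (\<lambda>w. (pd2 ^^ q) F (u, w)) v" by (simp add: pd2_def)
  also have "(\<lambda>w. (pd2 ^^ q) F (u, w)) = (deriv ^^ q) (\<lambda>v. F (u, v))" using Suc by (auto)
  finally show ?case by simp
qed

lemma pd1_pow: "(pd1 ^^ p) G (u, v) = (deriv ^^ p) (\<lambda>u. G (u, v)) u"
proof (induction p arbitrary: u)
  case 0 show ?case by simp
next
  case (Suc p)
  have "(pd1 ^^ Suc p) G (u, v) = deriv (\<lambda>w. (pd1 ^^ p) G (w, v)) u" by (simp add: pd1_def)
  also have "(\<lambda>w. (pd1 ^^ p) G (w, v)) = (deriv ^^ p) (\<lambda>u. G (u, v))" using Suc by (auto)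
  finally show ?case by simp
qed

lemma pderiv2_eq: "pderiv2 F p q (a, b) = (deriv ^^ p) (\<lambda>u. (deriv ^^ q) (\<lambda>v. F (u, v)) b) a"
  by (simp add: pderiv2_def pd1_pow pd2_pow)

lemma hol1:
  assumes "analytic2 F" "cmod v < 1"
  shows "(\<lambda>u. F (u, v)) holomorphic_on ball 0 1"
  unfolding holomorphic_on_def
proof
  fix u :: complex assume "u \<in> ball 0 1"
  then have "(u, v) \<in> bidisc" using assms(2) by (simp add: bidisc_def)
  then have "(\<lambda>w. F (w, v)) field_differentiable at u" using assms(1) unfolding analytic2_def by force
  then show "(\<lambda>u. F (u, v)) field_differentiable at u within ball 0 1"
    using field_differentiable_at_within by blast
qed

lemma hol2:
  assumes "analytic2 F" "cmod u < 1"
  shows "(\<lambda>v. F (u, v)) holomorphic_on ball 0 1"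
  unfolding holomorphic_on_def
proof
  fix v :: complex assume "v \<in> ball 0 1"
  then have "(u, v) \<in> bidisc" using assms(2) by (simp add: bidisc_def)
  then have "(\<lambda>w. F (u, w)) field_differentiable at v" using assms(1) unfolding analytic2_def by force
  then show "(\<lambda>v. F (u, v)) field_differentiable at v within ball 0 1"
    using field_differentiable_at_within by blast
qed

lemma contF: "analytic2 F \<Longrightarrow> continuous_on bidisc F"
  by (simp add: analytic2_def)

lemma cont_circ: "continuous_on S (circlepath c r)"
  unfolding circlepath by (intro continuous_intros)

lemma cont_vd_circ: "continuous_on S (\<lambda>t. vector_derivative (circlepath c r) (at t))"
  unfolding vector_derivative_circlepath by (intro continuous_intros)

lemma circ_in: "circlepath c r t \<in> sphere c \<bar>r\<bar>"
proof -
  have "cmod (exp (2 * complex_of_real pi * \<i> * complex_of_real t)) = 1"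
    by (simp add: norm_exp_eq_Re)
  then show ?thesis unfolding circlepath by (simp add: dist_norm norm_mult)
qed

lemma cont_param_circ:
  assumes "continuous_on (U \<times> sphere c r) (\<lambda>(x,y). f x y)" "r > 0"
  shows "continuous_on U (\<lambda>x. contour_integral (circlepath c r) (f x))"
proof -
  have eq: "(\<lambda>x. contour_integral (circlepath c r) (f x)) =
     (\<lambda>x. integral (cbox 0 1) (\<lambda>t. f x (circlepath c r t) * vector_derivative (circlepath c r) (at t)))"
    by (simp add: contour_integral_integral)
  have "continuous_on (U \<times> cbox 0 (1::real))
      (\<lambda>p. (\<lambda>(x,y). f x y) (fst p, circlepath c r (snd p)) * vector_derivative (circlepath c r) (at (snd p)))"
  proof (intro continuous_on_mult continuous_on_compose2[OF assms(1)] continuous_intros)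
    show "continuous_on (U \<times> cbox 0 1) (\<lambda>x. circlepath c r (snd x))"
      by (intro continuous_on_compose2[OF cont_circ] continuous_intros) auto
    show "continuous_on (U \<times> cbox 0 1) (\<lambda>x. vector_derivative (circlepath c r) (at (snd x)))"
      by (intro continuous_on_compose2[OF cont_vd_circ] continuous_intros) auto
    show "(\<lambda>x. (fst x, circlepath c r (snd x))) ` (U \<times> cbox 0 1) \<subseteq> U \<times> sphere c r"
      using circ_in[of c r] assms(2) by auto
  qed
  then have "continuous_on (U \<times> cbox 0 (1::real))
      (\<lambda>(x,t). f x (circlepath c r t) * vector_derivative (circlepath c r) (at t))"
    by (simp add: case_prod_beta)
  from integral_continuous_on_param[OF this] show ?thesis unfolding eq .
qed


lemma cball_sub_unit: "cmod u0 < 1 \<Longrightarrow> cball u0 ((1 - cmod u0)/2) \<subseteq> ball 0 1"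
proof
  fix x assume "cmod u0 < 1" "x \<in> cball u0 ((1 - cmod u0)/2)"
  then have "cmod (x - u0) \<le> (1 - cmod u0)/2" by (simp add: dist_norm norm_minus_commute)
  moreover have "cmod x \<le> cmod u0 + cmod (x - u0)" by (metis add.commute diff_add_cancel norm_triangle_ineq)
  ultimately show "x \<in> ball 0 1" using \<open>cmod u0 < 1\<close> by simp
qed

lemma Gq_hol:
  assumes an: "analytic2 F" and b: "cmod b < 1"
  shows "(\<lambda>u. (deriv ^^ q) (\<lambda>v. F (u, v)) b) holomorphic_on ball 0 1"
proof -
  define g where "g = (\<lambda>u. (deriv ^^ q) (\<lambda>v. F (u, v)) b)"
  have "\<exists>f'. (g has_field_derivative f') (at u0)" if u0: "u0 \<in> ball 0 1" for u0
  proof -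
    define r1 where "r1 = (1 - cmod u0)/2"
    define r2 where "r2 = (1 - cmod b)/2"
    have r1: "r1 > 0" using u0 by (simp add: r1_def)
    have r2: "r2 > 0" using b by (simp add: r2_def)
    have sub1: "cball u0 r1 \<subseteq> ball 0 1" using u0 cball_sub_unit[of u0] unfolding r1_def by simp
    have sub2: "cball b r2 \<subseteq> ball 0 1" using b cball_sub_unit[of b] unfolding r2_def by simp
    define C1 where "C1 = circlepath u0 r1"
    define C2 where "C2 = circlepath b r2"
    define H where "H = (\<lambda>\<xi>. contour_integral C2 (\<lambda>\<zeta>. F (\<xi>, \<zeta>) / (\<zeta> - b) ^ Suc q))"
    have cF: "continuous_on bidisc F" using an by (simp add: analytic2_def)
    have prod_sub: "ball 0 1 \<times> ball 0 1 \<subseteq> bidisc" by (auto simp: bidisc_def)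
    have i: "g u = fact q / (complex_of_real (2 * pi) * \<i>) * H u" if "u \<in> ball 0 1" for u
    proof -
      have h: "(\<lambda>v. F (u, v)) holomorphic_on ball 0 1" using hol2[OF an] that by simp
      show ?thesis unfolding g_def H_def C2_def
        by (rule Cauchy_higher_derivative_integral_circlepath(2))
           (use holomorphic_on_subset[OF h sub2] holomorphic_on_subset[OF h order_trans[OF ball_subset_cball sub2]] r2 in \<open>auto intro: holomorphic_on_imp_continuous_on\<close>)
    qed
    have iii: "continuous_on (cball u0 r1) H"
      unfolding H_def C2_def
    proof (rule cont_param_circ[OF _ r2])
      show "continuous_on (cball u0 r1 \<times> sphere b r2) (\<lambda>(x, y). F (x, y) / (y - b) ^ Suc q)"
      proof -
        have "continuous_on (cball u0 r1 \<times> sphere b r2) (\<lambda>p. F p / (snd p - b) ^ Suc q)"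
        proof -
          have S: "cball u0 r1 \<times> sphere b r2 \<subseteq> bidisc" using sub1 sub2 prod_sub sphere_cball by blast
          show ?thesis
            by (intro continuous_on_divide continuous_on_power continuous_on_diff continuous_on_snd
                continuous_on_id continuous_on_const continuous_on_subset[OF cF S]) (use r2 in auto)
        qed
        then show ?thesis by (simp add: case_prod_beta)
      qed
    qed
    have contH1: "continuous_on (path_image C1) H"
      using iii r1 unfolding C1_def by (auto intro: continuous_on_subset)
    have ii: "complex_of_real (2 * pi) * \<i> * H u = contour_integral C1 (\<lambda>\<xi>. H \<xi> / (\<xi> - u))"
      if u: "u \<in> ball u0 r1" for u
    proof -
      define \<Phi> where "\<Phi> = (\<lambda>\<xi> \<zeta>. F (\<xi>, \<zeta>) / (\<xi> - u) / (\<zeta> - b) ^ Suc q)"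
      have ne1: "\<xi> - u \<noteq> 0" if "\<xi> \<in> sphere u0 r1" for \<xi>
        using that u by (auto simp: dist_norm)
      have ne2: "\<zeta> - b \<noteq> 0" if "\<zeta> \<in> sphere b r2" for \<zeta>
        using that r2 by (auto simp: dist_norm)
      have cPhi: "continuous_on (sphere u0 r1 \<times> sphere b r2) (\<lambda>(y1, y2). \<Phi> y1 y2)"
      proof -
        have "continuous_on (sphere u0 r1 \<times> sphere b r2) (\<lambda>p. F p / (fst p - u) / (snd p - b) ^ Suc q)"
        proof -
          have S: "sphere u0 r1 \<times> sphere b r2 \<subseteq> bidisc" using sub1 sub2 prod_sub sphere_cball by blast
          show ?thesis
            by (intro continuous_on_divide continuous_on_power continuous_on_diff continuous_on_snd continuous_on_fst
                continuous_on_id continuous_on_const continuous_on_subset[OF cF S]) (use ne1 ne2 in auto)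
        qed
        then show ?thesis by (simp add: case_prod_beta \<Phi>_def)
      qed
      have uin: "u \<in> ball 0 1" using u sub1 ball_subset_cball by blast
      have step1: "contour_integral C2 (\<lambda>\<zeta>. complex_of_real (2 * pi) * \<i> * (F (u, \<zeta>) / (\<zeta> - b) ^ Suc q))
          = complex_of_real (2 * pi) * \<i> * H u"
        unfolding H_def
      proof (rule contour_integral_lmul)
        have "continuous_on (sphere b r2) (\<lambda>\<zeta>. F (u, \<zeta>) / (\<zeta> - b) ^ Suc q)"
        proof (intro continuous_intros continuous_on_compose2[OF cF])
          show "(\<lambda>x. (u, x)) ` sphere b r2 \<subseteq> bidisc" using uin sub2 sphere_cball prod_sub by blast
        qed (use ne2 in auto)
        then show "(\<lambda>\<zeta>. F (u, \<zeta>) / (\<zeta> - b) ^ Suc q) contour_integrable_on C2"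
          unfolding C2_def using r2 by (intro contour_integrable_continuous_circlepath) auto
      qed
      have step2: "complex_of_real (2 * pi) * \<i> * (F (u, \<zeta>) / (\<zeta> - b) ^ Suc q) = contour_integral C1 (\<lambda>\<xi>. \<Phi> \<xi> \<zeta>)"
        if z: "\<zeta> \<in> path_image C2" for \<zeta>
      proof -
        have zs: "\<zeta> \<in> sphere b r2" using z r2 unfolding C2_def by auto
        then have zin: "\<zeta> \<in> ball 0 1" using sub2 sphere_cball by blast
        have h: "(\<lambda>v. F (v, \<zeta>)) holomorphic_on ball 0 1" using hol1[OF an] zin by simp
        have "((\<lambda>\<xi>. F (\<xi>, \<zeta>) / (\<xi> - u)) has_contour_integral (2 * of_real pi * \<i> * F (u, \<zeta>))) C1"
          unfolding C1_def
          by (rule Cauchy_integral_circlepath)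
             (use holomorphic_on_subset[OF h sub1] holomorphic_on_subset[OF h order_trans[OF ball_subset_cball sub1]] u in \<open>auto intro: holomorphic_on_imp_continuous_on simp: dist_norm norm_minus_commute\<close>)
        then have "contour_integral C1 (\<lambda>\<xi>. F (\<xi>, \<zeta>) / (\<xi> - u)) = 2 * of_real pi * \<i> * F (u, \<zeta>)"
          by (rule contour_integral_unique)
        moreover have "contour_integral C1 (\<lambda>\<xi>. F (\<xi>, \<zeta>) / (\<xi> - u) / (\<zeta> - b) ^ Suc q)
              = contour_integral C1 (\<lambda>\<xi>. F (\<xi>, \<zeta>) / (\<xi> - u)) / (\<zeta> - b) ^ Suc q"
        proof (rule contour_integral_div)
          have "continuous_on (sphere u0 r1) (\<lambda>\<xi>. F (\<xi>, \<zeta>) / (\<xi> - u))"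
          proof (intro continuous_intros continuous_on_compose2[OF cF])
            show "(\<lambda>x. (x, \<zeta>)) ` sphere u0 r1 \<subseteq> bidisc" using zin sub1 sphere_cball prod_sub by blast
          qed (use ne1 in auto)
          then show "(\<lambda>\<xi>. F (\<xi>, \<zeta>) / (\<xi> - u)) contour_integrable_on C1"
            unfolding C1_def using r1 by (intro contour_integrable_continuous_circlepath) auto
        qed
        ultimately show ?thesis unfolding \<Phi>_def by simp
      qed
      have "complex_of_real (2 * pi) * \<i> * H u = contour_integral C2 (\<lambda>\<zeta>. contour_integral C1 (\<lambda>\<xi>. \<Phi> \<xi> \<zeta>))"
      proof -
        have "contour_integral C2 (\<lambda>\<zeta>. complex_of_real (2 * pi) * \<i> * (F (u, \<zeta>) / (\<zeta> - b) ^ Suc q))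
           = contour_integral C2 (\<lambda>\<zeta>. contour_integral C1 (\<lambda>\<xi>. \<Phi> \<xi> \<zeta>))"
          by (rule contour_integral_eq) (rule step2)
        then show ?thesis using step1 by simp
      qed
      also have "\<dots> = contour_integral C1 (\<lambda>\<xi>. contour_integral C2 (\<Phi> \<xi>))"
      proof (rule contour_integral_swap[symmetric])
        show "continuous_on (path_image C1 \<times> path_image C2) (\<lambda>(y1, y2). \<Phi> y1 y2)"
          using cPhi r1 r2 unfolding C1_def C2_def by simp
      qed (auto simp: C1_def C2_def intro: cont_vd_circ)
      also have "\<dots> = contour_integral C1 (\<lambda>\<xi>. H \<xi> / (\<xi> - u))"
      proof (rule contour_integral_eq)
        fix \<xi> assume "\<xi> \<in> path_image C1"
        then have xs: "\<xi> \<in> sphere u0 r1" using r1 unfolding C1_def by auto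
        then have xin: "\<xi> \<in> ball 0 1" using sub1 sphere_cball by blast
        have "contour_integral C2 (\<lambda>\<zeta>. F (\<xi>, \<zeta>) / (\<zeta> - b) ^ Suc q / (\<xi> - u))
              = contour_integral C2 (\<lambda>\<zeta>. F (\<xi>, \<zeta>) / (\<zeta> - b) ^ Suc q) / (\<xi> - u)"
        proof (rule contour_integral_div)
          have "continuous_on (sphere b r2) (\<lambda>\<zeta>. F (\<xi>, \<zeta>) / (\<zeta> - b) ^ Suc q)"
          proof (intro continuous_intros continuous_on_compose2[OF cF])
            show "(\<lambda>x. (\<xi>, x)) ` sphere b r2 \<subseteq> bidisc" using xin sub2 sphere_cball prod_sub by blast
          qed (use ne2 in auto)
          then show "(\<lambda>\<zeta>. F (\<xi>, \<zeta>) / (\<zeta> - b) ^ Suc q) contour_integrable_on C2"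
            unfolding C2_def using r2 by (intro contour_integrable_continuous_circlepath) auto
        qed
        moreover have "(\<lambda>\<zeta>. F (\<xi>, \<zeta>) / (\<zeta> - b) ^ Suc q / (\<xi> - u)) = \<Phi> \<xi>"
          unfolding \<Phi>_def by (auto simp: field_simps)
        ultimately show "contour_integral C2 (\<Phi> \<xi>) = H \<xi> / (\<xi> - u)" unfolding H_def by simp
      qed
      finally show ?thesis .
    qed
    define K where "K = (\<lambda>w. contour_integral C1 (\<lambda>\<xi>. H \<xi> / (\<xi> - w)))"
    have intK: "((\<lambda>\<xi>. H \<xi> / (\<xi> - w) ^ 1) has_contour_integral K w) C1" if w: "w \<in> ball u0 r1" for w
    proof -
      have "continuous_on (path_image C1) (\<lambda>\<xi>. H \<xi> / (\<xi> - w))"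
        by (intro continuous_intros contH1) (use w r1 in \<open>auto simp: C1_def dist_norm\<close>)
      then have "(\<lambda>\<xi>. H \<xi> / (\<xi> - w)) contour_integrable_on C1"
        unfolding C1_def by (rule contour_integrable_continuous_circlepath)
      then show ?thesis unfolding K_def by (simp add: has_contour_integral_integral)
    qed
    have u0in: "u0 \<in> ball u0 r1" using r1 by simp
    obtain K' where K': "(K has_field_derivative K') (at u0)"
      using Cauchy_next_derivative_circlepath(2)[OF contH1[unfolded C1_def] intK[unfolded C1_def], of u0]
         u0in by (auto simp: C1_def)
    have "((\<lambda>u. fact q / (complex_of_real (2 * pi) * \<i>) * (K u / (complex_of_real (2 * pi) * \<i>)))
          has_field_derivative fact q / (complex_of_real (2 * pi) * \<i>) * (K' / (complex_of_real (2 * pi) * \<i>))) (at u0)"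
      by (intro DERIV_cmult DERIV_cdivide K')
    then have "(g has_field_derivative fact q / (complex_of_real (2 * pi) * \<i>) * (K' / (complex_of_real (2 * pi) * \<i>))) (at u0)"
    proof (rule has_field_derivative_transform_within_open[OF _ open_ball u0in])
      fix u assume u: "u \<in> ball u0 r1"
      then have "u \<in> ball 0 1" using sub1 ball_subset_cball by blast
      then show "fact q / (complex_of_real (2 * pi) * \<i>) * (K u / (complex_of_real (2 * pi) * \<i>)) = g u"
      proof -
        have e1: "g u = fact q / (complex_of_real (2 * pi) * \<i>) * H u" using i \<open>u \<in> ball 0 1\<close> by blast
        have e2: "H u = K u / (complex_of_real (2 * pi) * \<i>)"
          using ii[OF u] unfolding K_def by (simp add: eq_divide_eq mult.commute)
        show ?thesis by (simp add: e1 e2)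
      qed
    qed
    then show ?thesis by blast
  qed
  then show ?thesis unfolding g_def[symmetric] by (simp add: holomorphic_on_open)
qed


lemma torus_eq: "torus2 (a, b) (r1, r2) = sphere a r1 \<times> sphere b r2"
  by (auto simp: torus2_def dist_norm norm_minus_commute)

lemma norm_le_add: "cmod x \<le> cmod a + cmod (x - a)"
  by (metis add.commute diff_add_cancel norm_triangle_ineq)

lemma cball_in_unit: "cmod a + r < 1 \<Longrightarrow> cball a r \<subseteq> ball 0 1"
proof
  fix x assume "cmod a + r < 1" "x \<in> cball a r"
  then show "x \<in> ball 0 1" using norm_le_add[of x a] by (simp add: dist_norm norm_minus_commute)
qed

lemma maxmod_ge:
  assumes an: "analytic2 F" and "cmod a + r1 < 1" "cmod b + r2 < 1"
    and x: "x \<in> torus2 (a, b) (r1, r2)"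
  shows "cmod (F x) \<le> maxmod (r1, r2) (a, b) F"
proof -
  have sub: "torus2 (a, b) (r1, r2) \<subseteq> bidisc"
    using cball_in_unit[OF assms(2)] cball_in_unit[OF assms(3)] sphere_cball
    unfolding torus_eq by (force simp: bidisc_def)
  have "compact (torus2 (a, b) (r1, r2))" unfolding torus_eq by (intro compact_Times compact_sphere)
  moreover have "continuous_on (torus2 (a, b) (r1, r2)) (\<lambda>z. cmod (F z))"
    by (intro continuous_intros continuous_on_subset[OF contF[OF an] sub])
  ultimately have "compact ((\<lambda>z. cmod (F z)) ` torus2 (a, b) (r1, r2))"
    by (rule compact_continuous_image[rotated])
  then have "bdd_above ((\<lambda>z. cmod (F z)) ` torus2 (a, b) (r1, r2))"
    by (intro bounded_imp_bdd_above compact_imp_bounded)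
  then show ?thesis unfolding maxmod_def using x by (rule cSUP_upper2) simp
qed

lemma cauchy2:
  assumes an: "analytic2 F" and r: "r1 > 0" "r2 > 0" and ab: "cmod a + r1 < 1" "cmod b + r2 < 1"
  shows "cmod (pderiv2 F p q (a, b)) \<le> fact p * fact q * maxmod (r1, r2) (a, b) F / (r1 ^ p * r2 ^ q)"
proof -
  define M where "M = maxmod (r1, r2) (a, b) F"
  define g where "g = (\<lambda>u. (deriv ^^ q) (\<lambda>v. F (u, v)) b)"
  have b1: "cmod b < 1" using ab r by simp
  have hg: "g holomorphic_on ball 0 1" unfolding g_def by (rule Gq_hol[OF an b1])
  have bnd: "norm (g x) \<le> fact q * M / r2 ^ q" if x: "norm (a - x) = r1" for x
  proof -
    have "cmod x \<le> cmod a + r1" using norm_le_add[of x a] x by (simp add: norm_minus_commute)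
    then have x1: "cmod x < 1" using ab by simp
    have hF: "(\<lambda>v. F (x, v)) holomorphic_on ball 0 1" by (rule hol2[OF an x1])
    show ?thesis unfolding g_def
    proof (rule Cauchy_inequality[OF _ _ r(2)])
      show "(\<lambda>v. F (x, v)) holomorphic_on ball b r2"
        using holomorphic_on_subset[OF hF] cball_in_unit[OF ab(2)] ball_subset_cball by blast
      show "continuous_on (cball b r2) (\<lambda>v. F (x, v))"
        using holomorphic_on_imp_continuous_on holomorphic_on_subset[OF hF cball_in_unit[OF ab(2)]] by blast
      fix y assume "norm (b - y) = r2"
      then have "(x, y) \<in> torus2 (a, b) (r1, r2)" using x by (simp add: torus2_def norm_minus_commute)
      then show "norm (F (x, y)) \<le> M" unfolding M_def by (rule maxmod_ge[OF an ab])
    qed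
  qed
  have "cmod ((deriv ^^ p) g a) \<le> fact p * (fact q * M / r2 ^ q) / r1 ^ p"
  proof (rule Cauchy_inequality[OF _ _ r(1)])
    show "g holomorphic_on ball a r1"
      using holomorphic_on_subset[OF hg] cball_in_unit[OF ab(1)] ball_subset_cball by blast
    show "continuous_on (cball a r1) g"
      using holomorphic_on_imp_continuous_on holomorphic_on_subset[OF hg cball_in_unit[OF ab(1)]] by blast
  qed (rule bnd)
  then show ?thesis unfolding pderiv2_eq g_def[symmetric] M_def by (simp add: field_simps)
qed

lemma expand:
  assumes an: "analytic2 F" and ab: "cmod a < 1" "cmod b < 1"
    and w: "cmod (w1 - a) < 1 - cmod a" "cmod (w2 - b) < 1 - cmod b"
  defines "c \<equiv> (\<lambda>p q. pderiv2 F p q (a, b) / (fact p * fact q))"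
  shows "(\<lambda>q. (\<Sum>p. c p q * (w1 - a) ^ p) * (w2 - b) ^ q) sums F (w1, w2)"
    and "\<And>q. summable (\<lambda>p. c p q * (w1 - a) ^ p)"
proof -
  define g where "g = (\<lambda>q u. (deriv ^^ q) (\<lambda>v. F (u, v)) b)"
  have ba: "ball a (1 - cmod a) \<subseteq> ball 0 1"
  proof
    fix x assume "x \<in> ball a (1 - cmod a)"
    then show "x \<in> ball 0 1" using norm_le_add[of x a] by (simp add: dist_norm norm_minus_commute)
  qed
  have bb: "ball b (1 - cmod b) \<subseteq> ball 0 1"
  proof
    fix x assume "x \<in> ball b (1 - cmod b)"
    then show "x \<in> ball 0 1" using norm_le_add[of x b] by (simp add: dist_norm norm_minus_commute)
  qed
  have w1in: "w1 \<in> ball a (1 - cmod a)" using w by (simp add: dist_norm norm_minus_commute)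
  have w2in: "w2 \<in> ball b (1 - cmod b)" using w by (simp add: dist_norm norm_minus_commute)
  have inner: "(\<lambda>p. c p q * (w1 - a) ^ p) sums (g q w1 / fact q)" for q
  proof -
    have hg: "g q holomorphic_on ball a (1 - cmod a)"
      unfolding g_def using holomorphic_on_subset[OF Gq_hol[OF an ab(2)] ba] .
    have "(\<lambda>p. (deriv ^^ p) (g q) a / fact p * (w1 - a) ^ p) sums g q w1"
      by (rule holomorphic_power_series[OF hg w1in])
    then have "(\<lambda>p. (deriv ^^ p) (g q) a / fact p * (w1 - a) ^ p / fact q) sums (g q w1 / fact q)"
      by (rule sums_divide)
    moreover have "(deriv ^^ p) (g q) a / fact p * (w1 - a) ^ p / fact q = c p q * (w1 - a) ^ p" for p
      unfolding c_def pderiv2_eq g_def by simp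
    ultimately show ?thesis by simp
  qed
  then show "\<And>q. summable (\<lambda>p. c p q * (w1 - a) ^ p)" by (auto simp: sums_iff)
  have x1: "cmod w1 < 1" using w1in ba by auto
  have hF: "(\<lambda>v. F (w1, v)) holomorphic_on ball b (1 - cmod b)"
    using holomorphic_on_subset[OF hol2[OF an x1] bb] .
  have "(\<lambda>q. (deriv ^^ q) (\<lambda>v. F (w1, v)) b / fact q * (w2 - b) ^ q) sums F (w1, w2)"
    by (rule holomorphic_power_series[OF hF w2in])
  moreover have "(deriv ^^ q) (\<lambda>v. F (w1, v)) b / fact q * (w2 - b) ^ q = (\<Sum>p. c p q * (w1 - a) ^ p) * (w2 - b) ^ q" for q
    using inner[of q] unfolding g_def by (simp add: sums_iff)
  ultimately show "(\<lambda>q. (\<Sum>p. c p q * (w1 - a) ^ p) * (w2 - b) ^ q) sums F (w1, w2)" by simp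
qed


lemma expand_bound:
  assumes an: "analytic2 F" and ab: "cmod a < 1" "cmod b < 1"
    and w: "cmod (w1 - a) < 1 - cmod a" "cmod (w2 - b) < 1 - cmod b"
    and d: "\<And>p q. cmod (pderiv2 F p q (a, b)) / (fact p * fact q) * cmod (w1 - a) ^ p * cmod (w2 - b) ^ q \<le> d p q"
    and s1: "\<And>q. summable (\<lambda>p. d p q)" and s2: "summable (\<lambda>q. \<Sum>p. d p q)"
  shows "cmod (F (w1, w2)) \<le> (\<Sum>q. \<Sum>p. d p q)"
proof -
  define c where "c = (\<lambda>p q. pderiv2 F p q (a, b) / (fact p * fact q))"
  note E = expand[OF an ab w]
  have Feq: "F (w1, w2) = (\<Sum>q. (\<Sum>p. c p q * (w1 - a) ^ p) * (w2 - b) ^ q)"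
    using E(1) unfolding c_def by (simp add: sums_iff)
  have S2: "summable (\<lambda>p. c p q * (w1 - a) ^ p)" for q using E(2)[of q] unfolding c_def by simp
  have T: "norm ((\<Sum>p. c p q * (w1 - a) ^ p) * (w2 - b) ^ q) \<le> (\<Sum>p. d p q)" for q
  proof -
    have "(\<Sum>p. c p q * (w1 - a) ^ p) * (w2 - b) ^ q = (\<Sum>p. c p q * (w1 - a) ^ p * (w2 - b) ^ q)"
      by (rule suminf_mult2[OF S2])
    also have "norm \<dots> \<le> (\<Sum>p. d p q)"
    proof (rule norm_suminf_le[OF _ s1])
      fix p
      have "norm (c p q * (w1 - a) ^ p * (w2 - b) ^ q)
          = cmod (pderiv2 F p q (a, b)) / (fact p * fact q) * cmod (w1 - a) ^ p * cmod (w2 - b) ^ q"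
        unfolding c_def by (simp add: norm_mult norm_divide norm_power norm_fact)
      then show "norm (c p q * (w1 - a) ^ p * (w2 - b) ^ q) \<le> d p q" using d by simp
    qed
    finally show ?thesis .
  qed
  show ?thesis unfolding Feq by (rule norm_suminf_le[OF T s2])
qed



lemma geo2:
  fixes a :: "nat \<Rightarrow> nat \<Rightarrow> real"
  assumes a0: "\<And>p q. 0 \<le> a p q" and ab: "\<And>p q. a p q \<le> B * e1 ^ p * e2 ^ q"
    and e: "0 \<le> e1" "e1 < 1" "0 \<le> e2" "e2 < 1"
  shows "\<And>q. summable (\<lambda>p. a p q)" and "summable (\<lambda>q. \<Sum>p. a p q)"
    and "(\<Sum>q. \<Sum>p. a p q) \<le> B / ((1 - e1) * (1 - e2))"
proof -
  have B0: "0 \<le> B" using a0[of 0 0] ab[of 0 0] by simp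
  have g1: "(\<lambda>p. B * e1 ^ p * e2 ^ q) sums (B * e2 ^ q / (1 - e1))" for q
  proof -
    have "(\<lambda>p. e1 ^ p) sums (1 / (1 - e1))" using geometric_sums[of e1] e by simp
    from sums_mult[OF this, of "B * e2 ^ q"] show ?thesis
      by (simp add: mult_ac)
  qed
  show s1: "summable (\<lambda>p. a p q)" for q
    by (rule summable_comparison_test[of _ "\<lambda>p. B * e1 ^ p * e2 ^ q"])
       (use a0 ab g1 in \<open>auto simp: sums_iff\<close>)
  have le1: "(\<Sum>p. a p q) \<le> B * e2 ^ q / (1 - e1)" for q
  proof -
    from g1[of q] have S: "summable (\<lambda>p. B * e1 ^ p * e2 ^ q)"
      and E: "(\<Sum>p. B * e1 ^ p * e2 ^ q) = B * e2 ^ q / (1 - e1)" by (auto simp: sums_iff)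
    show ?thesis using suminf_le[OF ab s1 S] E by simp
  qed
  have g2: "(\<lambda>q. B * e2 ^ q / (1 - e1)) sums (B / (1 - e1) / (1 - e2))"
  proof -
    have "(\<lambda>q. e2 ^ q) sums (1 / (1 - e2))" using geometric_sums[of e2] e by simp
    from sums_mult[OF this, of "B / (1 - e1)"] show ?thesis by (simp add: mult_ac)
  qed
  have n0: "0 \<le> (\<Sum>p. a p q)" for q by (rule suminf_nonneg[OF s1 a0])
  show s2: "summable (\<lambda>q. \<Sum>p. a p q)"
    by (rule summable_comparison_test[of _ "\<lambda>q. B * e2 ^ q / (1 - e1)"])
       (use n0 le1 g2 in \<open>auto simp: sums_iff\<close>)
  have "(\<Sum>q. \<Sum>p. a p q) \<le> (\<Sum>q. B * e2 ^ q / (1 - e1))"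
    by (rule suminf_le[OF le1 s2]) (use g2 in \<open>simp add: sums_iff\<close>)
  then show "(\<Sum>q. \<Sum>p. a p q) \<le> B / ((1 - e1) * (1 - e2))"
    using g2 by (simp add: sums_iff field_simps)
qed

context
  fixes \<beta> :: real and l1 l2 :: "complex \<times> complex \<Rightarrow> real" and F :: "complex \<times> complex \<Rightarrow> complex"
  assumes beta: "\<beta> > 1" and adm: "admissible_L \<beta> l1 l2" and an: "analytic2 F"
begin

lemma lbig: "z \<in> bidisc \<Longrightarrow> l1 z > \<beta> / (1 - cmod (fst z)) \<and> l2 z > \<beta> / (1 - cmod (snd z))"
  using adm by (auto simp: admissible_L_def)

lemma lpos: assumes "z \<in> bidisc" shows "l1 z > 0" "l2 z > 0"
proof -
  have "1 - cmod (fst z) > 0" "1 - cmod (snd z) > 0" using assms by (auto simp: bidisc_def)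
  then have "\<beta> / (1 - cmod (fst z)) > 0" "\<beta> / (1 - cmod (snd z)) > 0" using beta by auto
  then show "l1 z > 0" "l2 z > 0" using lbig[OF assms] by linarith+
qed

lemma lrad: assumes "z \<in> bidisc" "t \<le> \<beta>"
  shows "cmod (fst z) + t / l1 z < 1" "cmod (snd z) + t / l2 z < 1"
proof -
  have d1: "1 - cmod (fst z) > 0" "1 - cmod (snd z) > 0" using assms by (auto simp: bidisc_def)
  have "\<beta> < l1 z * (1 - cmod (fst z))" using lbig[OF assms(1)] d1 by (simp add: pos_divide_less_eq)
  then have "t < l1 z * (1 - cmod (fst z))" using assms by linarith
  then show "cmod (fst z) + t / l1 z < 1" using lpos[OF assms(1)] by (simp add: field_simps)
  have "\<beta> < l2 z * (1 - cmod (snd z))" using lbig[OF assms(1)] d1 by (simp add: pos_divide_less_eq)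
  then have "t < l2 z * (1 - cmod (snd z))" using assms by linarith
  then show "cmod (snd z) + t / l2 z < 1" using lpos[OF assms(1)] by (simp add: field_simps)
qed

lemma cauchyN:
  assumes z: "z \<in> bidisc" and t: "0 < t1" "t1 \<le> \<beta>" "0 < t2" "t2 \<le> \<beta>"
  shows "nterm F l1 l2 z (p, q) * (t1 ^ p * t2 ^ q) \<le> maxmod (divL (t1, t2) l1 l2 z) z F"
proof -
  define L1 where "L1 = l1 z" define L2 where "L2 = l2 z"
  have L: "L1 > 0" "L2 > 0" using lpos[OF z] by (auto simp: L1_def L2_def)
  define M where "M = maxmod (t1 / L1, t2 / L2) (fst z, snd z) F"
  have c: "cmod (pderiv2 F p q (fst z, snd z)) \<le> fact p * fact q * M / ((t1 / L1) ^ p * (t2 / L2) ^ q)"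
    unfolding M_def
    by (rule cauchy2[OF an]) (use t L lrad[OF z, of t1] lrad[OF z, of t2] in \<open>auto simp: L1_def L2_def\<close>)
  have pos: "(t1 / L1) ^ p * (t2 / L2) ^ q > 0" using t L by simp
  have "cmod (pderiv2 F p q z) * ((t1 / L1) ^ p * (t2 / L2) ^ q) \<le> fact p * fact q * M"
    using c pos by (simp add: pos_le_divide_eq)
  then have "cmod (pderiv2 F p q z) * ((t1 / L1) ^ p * (t2 / L2) ^ q) / (fact p * fact q) \<le> M"
    by (simp add: pos_divide_le_eq mult_ac)
  moreover have "nterm F l1 l2 z (p, q) * (t1 ^ p * t2 ^ q) = cmod (pderiv2 F p q z) * ((t1 / L1) ^ p * (t2 / L2) ^ q) / (fact p * fact q)"
    unfolding nterm_def L1_def L2_def by (simp add: field_simps power_divide)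
  ultimately show ?thesis unfolding M_def divL_def L1_def L2_def by simp
qed

lemma normexp:
  assumes z: "z \<in> bidisc" and s: "0 \<le> s1" "s1 \<le> \<beta>" "0 \<le> s2" "s2 \<le> \<beta>"
    and w: "cmod (fst w - fst z) \<le> s1 / l1 z" "cmod (snd w - snd z) \<le> s2 / l2 z"
    and d: "\<And>p q. nterm F l1 l2 z (p, q) * s1 ^ p * s2 ^ q \<le> d p q"
    and sm: "\<And>q. summable (\<lambda>p. d p q)" "summable (\<lambda>q. \<Sum>p. d p q)"
  shows "cmod (F w) \<le> (\<Sum>q. \<Sum>p. d p q)"
proof -
  have ab: "cmod (fst z) < 1" "cmod (snd z) < 1" using z by (auto simp: bidisc_def)
  have w1: "cmod (fst w - fst z) < 1 - cmod (fst z)" using w(1) lrad(1)[OF z s(2)] by linarith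
  have w2: "cmod (snd w - snd z) < 1 - cmod (snd z)" using w(2) lrad(2)[OF z s(4)] by linarith
  have L: "l1 z > 0" "l2 z > 0" using lpos[OF z] by auto
  have "cmod (F (fst w, snd w)) \<le> (\<Sum>q. \<Sum>p. d p q)"
  proof (rule expand_bound[OF an ab w1 w2 _ sm])
    fix p q
    have "cmod (pderiv2 F p q (fst z, snd z)) / (fact p * fact q) * cmod (fst w - fst z) ^ p * cmod (snd w - snd z) ^ q
        \<le> cmod (pderiv2 F p q (fst z, snd z)) / (fact p * fact q) * (s1 / l1 z) ^ p * (s2 / l2 z) ^ q"
      by (intro mult_mono power_mono w) (use s L in auto)
    also have "\<dots> = nterm F l1 l2 z (p, q) * s1 ^ p * s2 ^ q"
      unfolding nterm_def by (simp add: field_simps power_divide)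
    also have "\<dots> \<le> d p q" by (rule d)
    finally show "cmod (pderiv2 F p q (fst z, snd z)) / (fact p * fact q) * cmod (fst w - fst z) ^ p * cmod (snd w - snd z) ^ q \<le> d p q" .
  qed
  then show ?thesis by simp
qed

lemma maxmod_upper:
  assumes z: "z \<in> bidisc" and t: "0 \<le> t1" "t1 \<le> \<beta>" "0 \<le> t2" "t2 \<le> \<beta>"
    and w: "w \<in> torus2 z (divL (t1, t2) l1 l2 z)"
  shows "cmod (F w) \<le> maxmod (divL (t1, t2) l1 l2 z) z F"
proof -
  have "cmod (F w) \<le> maxmod (t1 / l1 z, t2 / l2 z) (fst z, snd z) F"
    by (rule maxmod_ge[OF an lrad(1)[OF z t(2)] lrad(2)[OF z t(4)]]) (use w in \<open>simp add: divL_def\<close>)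
  then show ?thesis by (simp add: divL_def)
qed

lemma torus_ne:
  assumes z: "z \<in> bidisc" and t: "0 \<le> t1" "0 \<le> t2"
  shows "(fst z + of_real (t1 / l1 z), snd z + of_real (t2 / l2 z)) \<in> torus2 z (divL (t1, t2) l1 l2 z)"
  using lpos[OF z] t by (simp add: torus2_def divL_def norm_divide)

lemma maxmod_le:
  assumes z: "z \<in> bidisc" and t: "0 \<le> t1" "0 \<le> t2"
    and B: "\<And>w. w \<in> torus2 z (divL (t1, t2) l1 l2 z) \<Longrightarrow> cmod (F w) \<le> B"
  shows "maxmod (divL (t1, t2) l1 l2 z) z F \<le> B"
  unfolding maxmod_def
  by (rule cSUP_least) (use torus_ne[OF z t] B in auto)

lemma maxmod_nonneg:
  assumes z: "z \<in> bidisc" and t: "0 \<le> t1" "t1 \<le> \<beta>" "0 \<le> t2" "t2 \<le> \<beta>"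
  shows "0 \<le> maxmod (divL (t1, t2) l1 l2 z) z F"
  using maxmod_upper[OF z t torus_ne[OF z t(1) t(3)]] by (meson norm_ge_zero order_trans)

end


lemma finiteT: "finite {k::nat \<times> nat. fst k + snd k \<le> n}"
  by (rule finite_subset[of _ "{..n} \<times> {..n}"]) auto

lemma nterm_nonneg: "l1 z \<ge> 0 \<Longrightarrow> l2 z \<ge> 0 \<Longrightarrow> 0 \<le> nterm F l1 l2 z k"
  unfolding nterm_def by simp

context
  fixes \<beta> :: real and l1 l2 :: "complex \<times> complex \<Rightarrow> real" and F :: "complex \<times> complex \<Rightarrow> complex"
  assumes beta: "\<beta> > 1" and adm: "admissible_L \<beta> l1 l2" and an: "analytic2 F"
begin

lemma rhs_imp_bounded:
  assumes P: "P \<ge> 1" "\<forall>z0\<in>bidisc. maxmod (divL (\<beta>, \<beta>) l1 l2 z0) z0 F \<le> P * maxmod (divL (1, 1) l1 l2 z0) z0 F"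
  shows "bounded_L_index F l1 l2"
proof -
  define T where "T = (\<lambda>n. {k::nat \<times> nat. fst k + snd k \<le> n})"
  have finT: "finite (T n)" for n unfolding T_def by (rule finiteT)
  have neT: "(0, 0) \<in> T n" for n unfolding T_def by simp
  define \<eta> where "\<eta> = sqrt (1 / \<beta>)"
  have eta: "0 < \<eta>" "\<eta> < 1" using beta by (auto simp: \<eta>_def)
  have eta2: "(1 / \<beta>) ^ n = \<eta> ^ n * \<eta> ^ n" for n
  proof -
    have "\<eta> ^ 2 = 1 / \<beta>" using beta by (simp add: \<eta>_def)
    then show ?thesis by (metis power_mult_distrib power2_eq_square power_mult mult.commute)
  qed
  obtain N where N: "\<eta> ^ N < (1 - \<eta>) ^ 2 / (2 * P * \<eta>)"
    using real_arch_pow_inv[of "(1 - \<eta>) ^ 2 / (2 * P * \<eta>)" \<eta>] eta P by auto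
  have N': "P * \<eta> ^ (N + 1) / (1 - \<eta>) ^ 2 \<le> 1 / 2"
  proof -
    have "\<eta> ^ N * (2 * P * \<eta>) < (1 - \<eta>) ^ 2" using N eta P by (simp add: pos_less_divide_eq)
    then show ?thesis using eta P by (simp add: field_simps)
  qed
  define C where "C = 2 / (\<eta> ^ (2 * N) * (1 - \<eta>) ^ 2)"
  have C0: "C > 0" using eta by (simp add: C_def)
  obtain M where M: "(1 / \<beta>) ^ M < 1 / (P * C)"
    using real_arch_pow_inv[of "1 / (P * C)" "1 / \<beta>"] beta C0 P by auto
  define n0 where "n0 = N + M"
  have main: "nterm F l1 l2 z (p, q) \<le> Max (nterm F l1 l2 z ` T n0)" if z: "z \<in> bidisc" for z p q
  proof -
    define a where "a = (\<lambda>p q. nterm F l1 l2 z (p, q))"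
    define A where "A = Max (nterm F l1 l2 z ` T N)"
    have L: "l1 z > 0" "l2 z > 0" using lpos[OF beta adm an z] by auto
    have a0: "0 \<le> a p q" for p q unfolding a_def using L by (intro nterm_nonneg) auto
    have A0: "0 \<le> A" unfolding A_def using a0[of 0 0] Max_ge[OF finite_imageI[OF finT] imageI[OF neT]]
      unfolding a_def by (meson order_trans)
    define MB where "MB = maxmod (divL (\<beta>, \<beta>) l1 l2 z) z F"
    define M1 where "M1 = maxmod (divL (1, 1) l1 l2 z) z F"
    have cB: "a p q * (\<beta> ^ p * \<beta> ^ q) \<le> MB" for p q
      unfolding a_def MB_def by (rule cauchyN[OF beta adm an z]) (use beta in auto)
    have aB: "a p q \<le> MB * (1 / \<beta>) ^ p * (1 / \<beta>) ^ q" for p q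
    proof -
      have "a p q \<le> MB / (\<beta> ^ p * \<beta> ^ q)" using cB[of p q] beta by (simp add: pos_le_divide_eq)
      then show ?thesis by (simp add: power_divide)
    qed
    have ib: "0 \<le> 1 / \<beta>" "1 / \<beta> < 1" using beta by auto
    note G = geo2[OF a0 aB ib ib]
    define S where "S = (\<Sum>q. \<Sum>p. a p q)"
    have S0: "0 \<le> S" unfolding S_def
      by (intro suminf_nonneg G(1) G(2) a0)
    have M1S: "M1 \<le> S"
    proof -
      have "cmod (F w) \<le> S" if w: "w \<in> torus2 z (divL (1, 1) l1 l2 z)" for w
      proof -
        have d1: "cmod (fst w - fst z) \<le> 1 / l1 z" "cmod (snd w - snd z) \<le> 1 / l2 z"
          using w by (auto simp: torus2_def divL_def)
        have d: "\<And>p q. nterm F l1 l2 z (p, q) * 1 ^ p * 1 ^ q \<le> a p q" by (simp add: a_def)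
        show ?thesis unfolding S_def
          by (rule normexp[OF beta adm an z _ _ _ _ d1 d G(1) G(2)]) (use beta in auto)
      qed
      then show ?thesis unfolding M1_def by (intro maxmod_le[OF beta adm an z]) auto
    qed
    have aPS: "a p q \<le> P * S * (1 / \<beta>) ^ (p + q)" for p q
    proof -
      have "MB \<le> P * M1" using P(2) z unfolding MB_def M1_def by blast
      also have "\<dots> \<le> P * S" using M1S P by simp
      finally have "a p q * (\<beta> ^ p * \<beta> ^ q) \<le> P * S" using cB[of p q] by linarith
      then have "a p q \<le> P * S / (\<beta> ^ p * \<beta> ^ q)" using beta by (simp add: pos_le_divide_eq)
      then show ?thesis by (simp add: power_divide power_add)
    qed
    define B' where "B' = A / \<eta> ^ (2 * N) + P * S * \<eta> ^ (N + 1)"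
    have aB': "a p q \<le> B' * \<eta> ^ p * \<eta> ^ q" for p q
    proof (cases "p + q \<le> N")
      case True
      have "a p q \<le> A" unfolding a_def A_def
        by (rule Max_ge[OF finite_imageI[OF finT]]) (use True in \<open>auto simp: T_def\<close>)
      moreover have "\<eta> ^ N \<le> \<eta> ^ p" "\<eta> ^ N \<le> \<eta> ^ q" using True eta by (auto intro: power_decreasing)
      then have "\<eta> ^ (2 * N) \<le> \<eta> ^ p * \<eta> ^ q" using eta
        by (metis mult_2 mult_mono power_add zero_le_power less_imp_le)
      then have "A \<le> A / \<eta> ^ (2 * N) * \<eta> ^ p * \<eta> ^ q" using A0 eta
        by (simp add: field_simps mult_left_mono)
      moreover have "0 \<le> P * S * \<eta> ^ (N + 1) * \<eta> ^ p * \<eta> ^ q" using P S0 eta by simp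
      ultimately show ?thesis unfolding B'_def by (simp add: algebra_simps)
    next
      case False
      have "a p q \<le> P * S * (\<eta> ^ (p + q) * \<eta> ^ (p + q))" using aPS[of p q] eta2 by simp
      also have "\<dots> \<le> P * S * (\<eta> ^ (N + 1) * \<eta> ^ (p + q))"
        using False eta P S0 by (intro mult_left_mono mult_right_mono power_decreasing) auto
      also have "\<dots> \<le> B' * \<eta> ^ p * \<eta> ^ q"
        unfolding B'_def using A0 eta by (simp add: algebra_simps power_add)
      finally show ?thesis .
    qed
    have "S \<le> B' / ((1 - \<eta>) * (1 - \<eta>))" unfolding S_def
      by (rule geo2(3)[OF a0 aB']) (use eta in auto)
    also have "\<dots> = A / (\<eta> ^ (2 * N) * (1 - \<eta>) ^ 2) + (P * \<eta> ^ (N + 1) / (1 - \<eta>) ^ 2) * S"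
      unfolding B'_def power2_eq_square add_divide_distrib divide_divide_eq_left by simp
    also have "\<dots> \<le> A / (\<eta> ^ (2 * N) * (1 - \<eta>) ^ 2) + 1 / 2 * S"
      using N' S0 by (intro add_left_mono mult_right_mono) auto
    finally have SCA: "S \<le> C * A" unfolding C_def by simp
    show ?thesis
    proof (cases "p + q \<le> n0")
      case True
      show ?thesis by (rule Max_ge[OF finite_imageI[OF finT]]) (use True in \<open>auto simp: T_def\<close>)
    next
      case False
      have "a p q \<le> P * S * (1 / \<beta>) ^ (p + q)" by (rule aPS)
      also have "\<dots> \<le> P * (C * A) * (1 / \<beta>) ^ M"
        using False SCA P ib beta S0 A0 C0 by (intro mult_mono power_decreasing) (auto simp: n0_def)
      also have "\<dots> \<le> A"
      proof -
        have "P * C * (1 / \<beta>) ^ M \<le> 1" using M P C0 by (simp add: field_simps)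
        then show ?thesis using A0 by (metis mult.commute mult.left_commute mult_left_le)
      qed
      also have "A \<le> Max (nterm F l1 l2 z ` T n0)" unfolding A_def
      proof (rule Max_mono)
        show "nterm F l1 l2 z ` T N \<noteq> {}" using neT by blast
        show "nterm F l1 l2 z ` T N \<subseteq> nterm F l1 l2 z ` T n0" by (auto simp: T_def n0_def)
      qed (use finT in auto)
      finally show ?thesis unfolding a_def .
    qed
  qed
  show ?thesis unfolding bounded_L_index_def using main unfolding T_def by blast
qed

end


lemma Q2_facts:
  assumes Q: "Q2 \<beta> l1 l2" and r: "0 \<le> r1" "r1 \<le> \<beta>" "0 \<le> r2" "r2 \<le> \<beta>"
  shows "0 < Inf (ratios \<beta> l1 l2 l1 (r1, r2))" "0 < Inf (ratios \<beta> l1 l2 l2 (r1, r2))"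
    and "\<And>z0 z. z0 \<in> bidisc \<Longrightarrow> z \<in> bidisc \<Longrightarrow> z \<in> cpolydisc z0 (divL (r1, r2) l1 l2 z0) \<Longrightarrow>
           Inf (ratios \<beta> l1 l2 l1 (r1, r2)) \<le> l1 z / l1 z0 \<and> Inf (ratios \<beta> l1 l2 l2 (r1, r2)) \<le> l2 z / l2 z0 \<and>
           l1 z / l1 z0 \<le> Sup (ratios \<beta> l1 l2 l1 (r1, r2)) \<and> l2 z / l2 z0 \<le> Sup (ratios \<beta> l1 l2 l2 (r1, r2))"
proof -
  have H: "\<forall>lj\<in>{l1, l2}. 0 < Inf (ratios \<beta> l1 l2 lj (r1, r2)) \<and> bdd_below (ratios \<beta> l1 l2 lj (r1, r2)) \<and>
           bdd_above (ratios \<beta> l1 l2 lj (r1, r2))"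
    using Q r unfolding Q2_def by auto
  then show "0 < Inf (ratios \<beta> l1 l2 l1 (r1, r2))" "0 < Inf (ratios \<beta> l1 l2 l2 (r1, r2))" by auto
  fix z0 z assume zz: "z0 \<in> bidisc" "z \<in> bidisc" "z \<in> cpolydisc z0 (divL (r1, r2) l1 l2 z0)"
  have m1: "l1 z / l1 z0 \<in> ratios \<beta> l1 l2 l1 (r1, r2)" using zz unfolding ratios_def by blast
  have m2: "l2 z / l2 z0 \<in> ratios \<beta> l1 l2 l2 (r1, r2)" using zz unfolding ratios_def by blast
  show "Inf (ratios \<beta> l1 l2 l1 (r1, r2)) \<le> l1 z / l1 z0 \<and> Inf (ratios \<beta> l1 l2 l2 (r1, r2)) \<le> l2 z / l2 z0 \<and>
           l1 z / l1 z0 \<le> Sup (ratios \<beta> l1 l2 l1 (r1, r2)) \<and> l2 z / l2 z0 \<le> Sup (ratios \<beta> l1 l2 l2 (r1, r2))"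
    using H m1 m2 by (auto intro: cInf_lower cSup_upper)
qed

lemma nterm00: "nterm F l1 l2 w (0, 0) = cmod (F w)"
  by (simp add: nterm_def pderiv2_def)

context
  fixes \<beta> :: real and l1 l2 :: "complex \<times> complex \<Rightarrow> real" and F :: "complex \<times> complex \<Rightarrow> complex"
  assumes beta: "\<beta> > 1" and Q: "Q2 \<beta> l1 l2" and an: "analytic2 F"
begin

lemma adm: "admissible_L \<beta> l1 l2" using Q by (simp add: Q2_def)

lemma bounded_imp_rhs:
  assumes BI: "bounded_L_index F l1 l2"
    and r: "0 < r1'" "r1' < r1''" "r1'' \<le> \<beta>" "0 < r2'" "r2' < r2''" "r2'' \<le> \<beta>"
  shows "\<exists>p1::real. p1 \<ge> 1 \<and> (\<forall>z0 \<in> bidisc.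
          maxmod (divL (r1'', r2'') l1 l2 z0) z0 F \<le> p1 * maxmod (divL (r1', r2') l1 l2 z0) z0 F)"
proof -
  obtain N where N: "\<And>z p q. z \<in> bidisc \<Longrightarrow> nterm F l1 l2 z (p, q) \<le> Max (nterm F l1 l2 z ` {k. fst k + snd k \<le> N})"
    using BI unfolding bounded_L_index_def by blast
  define T where "T = {k::nat \<times> nat. fst k + snd k \<le> N}"
  have finT: "finite T" unfolding T_def by (rule finiteT)
  have neT: "(0, 0) \<in> T" unfolding T_def by simp
  define AM where "AM = (\<lambda>z. Max (nterm F l1 l2 z ` T))"
  have AMge: "nterm F l1 l2 z k \<le> AM z" if "k \<in> T" for z k
    unfolding AM_def by (rule Max_ge[OF finite_imageI[OF finT]]) (use that in auto)
  have AM0: "0 \<le> AM z" if "z \<in> bidisc" for z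
    using AMge[OF neT, of z] nterm_nonneg[of l1 z l2 F "(0,0)"] lpos[OF beta adm an that] by linarith
  have NA: "nterm F l1 l2 z (p, q) \<le> AM z" if "z \<in> bidisc" for z p q
    using N[OF that] unfolding AM_def T_def by blast
  have q14: "0 \<le> (1/4::real)" "1/4 \<le> \<beta>" using beta by auto
  note QL = Q2_facts[OF Q q14 q14]
  define lam where "lam = min (Inf (ratios \<beta> l1 l2 l1 (1/4, 1/4))) (Inf (ratios \<beta> l1 l2 l2 (1/4, 1/4)))"
  have lam: "lam > 0" using QL(1,2) by (simp add: lam_def)
  define t where "t = min lam 1 / 4"
  have t: "0 < t" "t \<le> 1/4" using lam by (auto simp: t_def)
  define K where "K = 4 / t ^ N"
  have K0: "K > 0" using t by (simp add: K_def)
  have step: "AM z1 \<le> K * AM z0"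
    if z0: "z0 \<in> bidisc" and z1: "z1 \<in> bidisc"
      and d: "cmod (fst z1 - fst z0) \<le> (1/4) / l1 z0" "cmod (snd z1 - snd z0) \<le> (1/4) / l2 z0" for z0 z1
  proof -
    have L0: "l1 z0 > 0" "l2 z0 > 0" using lpos[OF beta adm an z0] by auto
    have L1: "l1 z1 > 0" "l2 z1 > 0" using lpos[OF beta adm an z1] by auto
    have inpd: "z1 \<in> cpolydisc z0 (divL (1/4, 1/4) l1 l2 z0)"
      using d by (simp add: cpolydisc_def divL_def)
    note R = QL(3)[OF z0 z1 inpd]
    have tl1: "t / l1 z1 \<le> (1/4) / l1 z0"
    proof -
      have "lam \<le> l1 z1 / l1 z0" using R unfolding lam_def by linarith
      then have "t \<le> l1 z1 / l1 z0 / 4" unfolding t_def by (auto simp: min_def)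
      then show ?thesis using L0 L1 by (simp add: field_simps)
    qed
    have tl2: "t / l2 z1 \<le> (1/4) / l2 z0"
    proof -
      have "lam \<le> l2 z1 / l2 z0" using R unfolding lam_def by linarith
      then have "t \<le> l2 z1 / l2 z0 / 4" unfolding t_def by (auto simp: min_def)
      then show ?thesis using L0 L1 by (simp add: field_simps)
    qed
    have Mle: "maxmod (divL (t, t) l1 l2 z1) z1 F \<le> 4 * AM z0"
    proof (rule maxmod_le[OF beta adm an z1])
      fix w assume w: "w \<in> torus2 z1 (divL (t, t) l1 l2 z1)"
      have w1: "cmod (fst w - fst z0) \<le> (1/2) / l1 z0"
      proof -
        have "cmod (fst w - fst z0) \<le> cmod (fst w - fst z1) + cmod (fst z1 - fst z0)"
          by (metis diff_add_cancel norm_triangle_ineq add_diff_eq)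
        also have "\<dots> \<le> t / l1 z1 + (1/4) / l1 z0" using w d by (simp add: torus2_def divL_def)
        also have "\<dots> \<le> (1/2) / l1 z0" using tl1 by (simp add: field_simps)
        finally show ?thesis .
      qed
      have w2: "cmod (snd w - snd z0) \<le> (1/2) / l2 z0"
      proof -
        have "cmod (snd w - snd z0) \<le> cmod (snd w - snd z1) + cmod (snd z1 - snd z0)"
          by (metis diff_add_cancel norm_triangle_ineq add_diff_eq)
        also have "\<dots> \<le> t / l2 z1 + (1/4) / l2 z0" using w d by (simp add: torus2_def divL_def)
        also have "\<dots> \<le> (1/2) / l2 z0" using tl2 by (simp add: field_simps)
        finally show ?thesis .
      qed
      define dd where "dd = (\<lambda>p q. AM z0 * (1/2::real) ^ p * (1/2) ^ q)"
      have dd0: "0 \<le> dd p q" for p q using AM0[OF z0] by (simp add: dd_def)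
      have ddle: "dd p q \<le> AM z0 * (1/2) ^ p * (1/2) ^ q" for p q by (simp add: dd_def)
      have hh: "0 \<le> (1/2::real)" "(1/2::real) < 1" by auto
      note G = geo2[OF dd0 ddle hh hh]
      have "cmod (F w) \<le> (\<Sum>q. \<Sum>p. dd p q)"
      proof (rule normexp[OF beta adm an z0 _ _ _ _ w1 w2 _ G(1) G(2)])
        fix p q
        show "nterm F l1 l2 z0 (p, q) * (1 / 2) ^ p * (1 / 2) ^ q \<le> dd p q"
          unfolding dd_def using NA[OF z0, of p q] by (intro mult_right_mono) auto
      qed (use beta in auto)
      also have "\<dots> \<le> AM z0 / ((1 - 1/2) * (1 - 1/2))" by (rule G(3))
      finally show "cmod (F w) \<le> 4 * AM z0" by simp
    qed (use t in auto)
    show ?thesis unfolding AM_def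
    proof (subst Max_le_iff)
      show "finite (nterm F l1 l2 z1 ` T)" using finT by simp
      show "nterm F l1 l2 z1 ` T \<noteq> {}" using neT by blast
      show "\<forall>a\<in>nterm F l1 l2 z1 ` T. a \<le> K * Max (nterm F l1 l2 z0 ` T)"
      proof
        fix x assume "x \<in> nterm F l1 l2 z1 ` T"
        then obtain p q where pq: "(p, q) \<in> T" and x: "x = nterm F l1 l2 z1 (p, q)" by auto
        have c: "x * (t ^ p * t ^ q) \<le> 4 * AM z0"
          using cauchyN[OF beta adm an z1, of t t p q] t beta Mle x by auto
        have tp: "t ^ N \<le> t ^ p * t ^ q"
          using pq t unfolding T_def power_add[symmetric] by (intro power_decreasing) auto
        have tN: "t ^ N > 0" using t by simp
        have x0: "0 \<le> x" using x nterm_nonneg[of l1 z1 l2 F "(p,q)"] L1 by auto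
        have "x * t ^ N \<le> 4 * AM z0" using c tp x0 by (meson mult_left_mono order_trans)
        then have "x \<le> 4 * AM z0 / t ^ N" using tN by (simp add: pos_le_divide_eq)
        then show "x \<le> K * Max (nterm F l1 l2 z0 ` T)" unfolding K_def by (simp add: AM_def)
      qed
    qed
  qed
  have qb: "0 \<le> \<beta>" "\<beta> \<le> \<beta>" using beta by auto
  note QB = Q2_facts[OF Q qb qb]
  define Lam where "Lam = max (max (Sup (ratios \<beta> l1 l2 l1 (\<beta>, \<beta>))) (Sup (ratios \<beta> l1 l2 l2 (\<beta>, \<beta>)))) 1"
  have Lam1: "Lam \<ge> 1" by (simp add: Lam_def)
  define n where "n = nat \<lceil>4 * \<beta> * Lam\<rceil> + 1"
  have n1: "n \<ge> 1" by (simp add: n_def)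
  have nbig: "real n \<ge> 4 * \<beta> * Lam" unfolding n_def by linarith
  have chain: "cmod (F w) \<le> K ^ n * AM z0"
    if z0: "z0 \<in> bidisc" and w: "cmod (fst w - fst z0) \<le> \<beta> / l1 z0" "cmod (snd w - snd z0) \<le> \<beta> / l2 z0" for z0 w
  proof -
    have L0: "l1 z0 > 0" "l2 z0 > 0" using lpos[OF beta adm an z0] by auto
    define zi where "zi = (\<lambda>i::nat. (fst z0 + of_real (real i / real n) * (fst w - fst z0),
                                   snd z0 + of_real (real i / real n) * (snd w - snd z0)))"
    have np: "real n > 0" using n1 by simp
    have d1: "cmod (fst (zi i) - fst z0) \<le> \<beta> / l1 z0" "cmod (snd (zi i) - snd z0) \<le> \<beta> / l2 z0"
      if "i \<le> n" for i
    proof -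
      have f: "real i / real n \<le> 1" "0 \<le> real i / real n" using that np by auto
      have "cmod (fst (zi i) - fst z0) = real i / real n * cmod (fst w - fst z0)"
        unfolding zi_def by (simp add: norm_mult norm_divide del: of_real_divide)
      also have "\<dots> \<le> 1 * (\<beta> / l1 z0)" using f w by (intro mult_mono) auto
      finally show "cmod (fst (zi i) - fst z0) \<le> \<beta> / l1 z0" by simp
      have "cmod (snd (zi i) - snd z0) = real i / real n * cmod (snd w - snd z0)"
        unfolding zi_def by (simp add: norm_mult norm_divide del: of_real_divide)
      also have "\<dots> \<le> 1 * (\<beta> / l2 z0)" using f w by (intro mult_mono) auto
      finally show "cmod (snd (zi i) - snd z0) \<le> \<beta> / l2 z0" by simp
    qed
    have zin: "zi i \<in> bidisc" if "i \<le> n" for i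
    proof -
      have "cmod (fst (zi i)) \<le> cmod (fst z0) + cmod (fst (zi i) - fst z0)" by (rule norm_le_add)
      then have a: "cmod (fst (zi i)) < 1" using d1(1)[OF that] lrad(1)[OF beta adm an z0 qb(2)] by linarith
      have "cmod (snd (zi i)) \<le> cmod (snd z0) + cmod (snd (zi i) - snd z0)" by (rule norm_le_add)
      then have b: "cmod (snd (zi i)) < 1" using d1(2)[OF that] lrad(2)[OF beta adm an z0 qb(2)] by linarith
      show ?thesis using a b by (simp add: bidisc_def)
    qed
    have lz: "l1 (zi i) \<le> Lam * l1 z0 \<and> l2 (zi i) \<le> Lam * l2 z0" if "i \<le> n" for i
    proof -
      have "zi i \<in> cpolydisc z0 (divL (\<beta>, \<beta>) l1 l2 z0)"
        using d1[OF that] by (simp add: cpolydisc_def divL_def)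
      note R = QB(3)[OF z0 zin[OF that] this]
      have "l1 (zi i) / l1 z0 \<le> Lam" "l2 (zi i) / l2 z0 \<le> Lam" using R unfolding Lam_def by auto
      then show ?thesis using L0 by (simp add: pos_divide_le_eq)
    qed
    have stepd: "cmod (fst (zi (Suc i)) - fst (zi i)) \<le> (1/4) / l1 (zi i) \<and>
                 cmod (snd (zi (Suc i)) - snd (zi i)) \<le> (1/4) / l2 (zi i)" if "Suc i \<le> n" for i
    proof -
      have ii: "i \<le> n" using that by simp
      have Li: "l1 (zi i) > 0" "l2 (zi i) > 0" using lpos[OF beta adm an zin[OF ii]] by auto
      have e1: "fst (zi (Suc i)) - fst (zi i) = of_real (1 / real n) * (fst w - fst z0)"
        unfolding zi_def using np by (simp add: field_simps)
      have e2: "snd (zi (Suc i)) - snd (zi i) = of_real (1 / real n) * (snd w - snd z0)"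
        unfolding zi_def using np by (simp add: field_simps)
      have gen: "1 / real n * x \<le> (1/4) / li"
        if x: "0 \<le> x" "x \<le> \<beta> / l0" and li: "li > 0" "li \<le> Lam * l0" and l0: "l0 > 0" for x li l0
      proof -
        have "1 / real n * x \<le> 1 / real n * (\<beta> / l0)" using x np by (intro mult_left_mono) auto
        also have "\<dots> \<le> (1/4) / li"
        proof -
          have "\<beta> * (4 * li) \<le> \<beta> * (4 * (Lam * l0))" using li beta by (intro mult_left_mono) auto
          also have "\<dots> = (4 * \<beta> * Lam) * l0" by simp
          also have "\<dots> \<le> real n * l0" using nbig l0 by (intro mult_right_mono) auto
          finally have "\<beta> * (4 * li) \<le> real n * l0" .
          then show ?thesis using np l0 li by (simp add: field_simps)
        qed
        finally show ?thesis .
      qed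
      have "cmod (fst (zi (Suc i)) - fst (zi i)) = 1 / real n * cmod (fst w - fst z0)"
        unfolding e1 by (simp add: norm_mult norm_divide)
      also have "\<dots> \<le> (1/4) / l1 (zi i)" using gen w(1) Li(1) lz[OF ii] L0(1) by auto
      finally have A1: "cmod (fst (zi (Suc i)) - fst (zi i)) \<le> (1/4) / l1 (zi i)" .
      have "cmod (snd (zi (Suc i)) - snd (zi i)) = 1 / real n * cmod (snd w - snd z0)"
        unfolding e2 by (simp add: norm_mult norm_divide)
      also have "\<dots> \<le> (1/4) / l2 (zi i)" using gen w(2) Li(2) lz[OF ii] L0(2) by auto
      finally show ?thesis using A1 by simp
    qed
    have ind: "i \<le> n \<Longrightarrow> AM (zi i) \<le> K ^ i * AM z0" for i
    proof (induction i)
      case 0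
      have "zi 0 = z0" by (simp add: zi_def)
      then show ?case by simp
    next
      case (Suc i)
      have "AM (zi (Suc i)) \<le> K * AM (zi i)"
        using step[OF zin[of i] zin[OF Suc.prems]] stepd[OF Suc.prems] Suc.prems by auto
      also have "\<dots> \<le> K * (K ^ i * AM z0)" using Suc K0 by (intro mult_left_mono) auto
      finally show ?case by simp
    qed
    have "zi n = w" using np by (simp add: zi_def)
    then have "AM w \<le> K ^ n * AM z0" using ind[of n] by simp
    moreover have "cmod (F w) \<le> AM w" using AMge[OF neT, of w] nterm00[of F l1 l2 w] by simp
    ultimately show ?thesis by linarith
  qed
  define rho where "rho = min (min r1' r2') 1"
  have rho: "0 < rho" "rho \<le> 1" "rho \<le> r1'" "rho \<le> r2'" using r by (auto simp: rho_def)
  define p1 where "p1 = max 1 (K ^ n * (1 / rho) ^ N)"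
  have "p1 \<ge> 1" by (simp add: p1_def)
  moreover have "maxmod (divL (r1'', r2'') l1 l2 z0) z0 F \<le> p1 * maxmod (divL (r1', r2') l1 l2 z0) z0 F"
    if z0: "z0 \<in> bidisc" for z0
  proof -
    have L0: "l1 z0 > 0" "l2 z0 > 0" using lpos[OF beta adm an z0] by auto
    define M' where "M' = maxmod (divL (r1', r2') l1 l2 z0) z0 F"
    have M'0: "0 \<le> M'" unfolding M'_def by (rule maxmod_nonneg[OF beta adm an z0]) (use r in auto)
    have AMle: "AM z0 \<le> (1 / rho) ^ N * M'" unfolding AM_def
    proof (subst Max_le_iff)
      show "finite (nterm F l1 l2 z0 ` T)" using finT by simp
      show "nterm F l1 l2 z0 ` T \<noteq> {}" using neT by blast
      show "\<forall>a\<in>nterm F l1 l2 z0 ` T. a \<le> (1 / rho) ^ N * M'"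
      proof
        fix x assume "x \<in> nterm F l1 l2 z0 ` T"
        then obtain p q where pq: "(p, q) \<in> T" and x: "x = nterm F l1 l2 z0 (p, q)" by auto
        have c: "x * (r1' ^ p * r2' ^ q) \<le> M'"
          unfolding M'_def x by (rule cauchyN[OF beta adm an z0]) (use r in auto)
        have x0: "0 \<le> x" using x nterm_nonneg[of l1 z0 l2 F "(p,q)"] L0 by auto
        have "rho ^ N \<le> rho ^ (p + q)" using pq rho unfolding T_def by (intro power_decreasing) auto
        also have "\<dots> = rho ^ p * rho ^ q" by (simp add: power_add)
        also have "\<dots> \<le> r1' ^ p * r2' ^ q" using rho by (intro mult_mono power_mono) auto
        finally have "x * rho ^ N \<le> M'" using c x0 by (meson mult_left_mono order_trans)
        then have "x \<le> M' / rho ^ N" using rho by (simp add: pos_le_divide_eq)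
        then show "x \<le> (1 / rho) ^ N * M'" by (simp add: power_divide)
      qed
    qed
    have "maxmod (divL (r1'', r2'') l1 l2 z0) z0 F \<le> K ^ n * ((1 / rho) ^ N * M')"
    proof (rule maxmod_le[OF beta adm an z0])
      fix w assume w: "w \<in> torus2 z0 (divL (r1'', r2'') l1 l2 z0)"
      have w1: "cmod (fst w - fst z0) \<le> \<beta> / l1 z0" "cmod (snd w - snd z0) \<le> \<beta> / l2 z0"
        using w r L0 by (auto simp: torus2_def divL_def divide_right_mono)
      have "cmod (F w) \<le> K ^ n * AM z0" by (rule chain[OF z0 w1])
      also have "\<dots> \<le> K ^ n * ((1 / rho) ^ N * M')" using AMle K0 by (intro mult_left_mono) auto
      finally show "cmod (F w) \<le> K ^ n * ((1 / rho) ^ N * M')" .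
    qed (use r in auto)
    also have "\<dots> \<le> p1 * M'" unfolding p1_def using M'0
      by (metis max.cobounded2 mult.assoc mult_right_mono)
    finally show ?thesis unfolding M'_def .
  qed
  ultimately show ?thesis by blast
qed

end

theorem theorem5:
  fixes \<beta> :: real
    and l1 l2 :: "complex \<times> complex \<Rightarrow> real"
    and F :: "complex \<times> complex \<Rightarrow> complex"
  assumes "\<beta> > 1"
    and "Q2 \<beta> l1 l2"
    and "analytic2 F"
  shows "bounded_L_index F l1 l2 \<longleftrightarrow>
    (\<forall>r1' r2' r1'' r2''. 0 < r1' \<and> r1' < r1'' \<and> r1'' \<le> \<beta> \<and>
                         0 < r2' \<and> r2' < r2'' \<and> r2'' \<le> \<beta> \<longrightarrow>
       (\<exists>p1::real. p1 \<ge> 1 \<and> (\<forall>z0 \<in> bidisc.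
          maxmod (divL (r1'', r2'') l1 l2 z0) z0 F
            \<le> p1 * maxmod (divL (r1', r2') l1 l2 z0) z0 F)))"
proof
  assume BI: "bounded_L_index F l1 l2"
  show "\<forall>r1' r2' r1'' r2''. 0 < r1' \<and> r1' < r1'' \<and> r1'' \<le> \<beta> \<and>
                         0 < r2' \<and> r2' < r2'' \<and> r2'' \<le> \<beta> \<longrightarrow>
       (\<exists>p1::real. p1 \<ge> 1 \<and> (\<forall>z0 \<in> bidisc.
          maxmod (divL (r1'', r2'') l1 l2 z0) z0 F
            \<le> p1 * maxmod (divL (r1', r2') l1 l2 z0) z0 F))"
    using bounded_imp_rhs[OF assms BI] by blast
next
  assume R: "\<forall>r1' r2' r1'' r2''. 0 < r1' \<and> r1' < r1'' \<and> r1'' \<le> \<beta> \<and>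
                         0 < r2' \<and> r2' < r2'' \<and> r2'' \<le> \<beta> \<longrightarrow>
       (\<exists>p1::real. p1 \<ge> 1 \<and> (\<forall>z0 \<in> bidisc.
          maxmod (divL (r1'', r2'') l1 l2 z0) z0 F
            \<le> p1 * maxmod (divL (r1', r2') l1 l2 z0) z0 F))"
  then obtain P where P: "P \<ge> 1" "\<forall>z0 \<in> bidisc. maxmod (divL (\<beta>, \<beta>) l1 l2 z0) z0 F
            \<le> P * maxmod (divL (1, 1) l1 l2 z0) z0 F"
    using assms(1) by (metis order_refl zero_less_one)
  have adm: "admissible_L \<beta> l1 l2" using assms(2) by (simp add: Q2_def)
  show "bounded_L_index F l1 l2" by (rule rhs_imp_bounded[OF assms(1) adm assms(3) P])
qed

end
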